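(* Let $\varphi_0\in\mathrm{Mon}_+$. There exist a vector field $v\in L^2([0,1],H^1_0([0,1]))$ and a Lagrangian flow $\varphi$ associated with $v$ such that $\varphi(0,x)=\varphi_0(x)$ for all $x\in[0,1]$, and $\varphi(1,x)=1/2$ for $0<x<1$, $\varphi(1,0)=0$, $\varphi(1,1)=1$.
   Context: $\mathrm{Mon}_+$ denotes the set of nondecreasing functions $f:[0,1]\to[0,1]$ with $f(0)=0$ and $f(1)=1$. Definition (Lagrangian flow): let $v\in L^1([0,1],C([0,1]))$. A map $\varphi:[0,1]\times[0,1]\to[0,1]$, $(t,x)\mapsto\varphi(t,x)$, is a Lagrangian flow associated with $v$ if (i) $x\mapsto\varphi(t,x)$ is nondecreasing for every $t$, and (ii) for every $x$ the map $t\mapsto\varphi(t,x)$ is absolutely continuous and $\varphi(t,x)-\varphi(s,x)=\int_s^t v(r,\varphi(r,x))\,dr$ for all $0\le s<t\le 1$. *)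

theory Defs
  imports "HOL-Analysis.Analysis"
begin

definition Mon_plus :: "(real \<Rightarrow> real) set" where
  "Mon_plus = {f. mono_on {0..1} f \<and> f ` {0..1} \<subseteq> {0..1} \<and> f 0 = 0 \<and> f 1 = 1}"

definition abs_continuous_on :: "real \<Rightarrow> real \<Rightarrow> (real \<Rightarrow> real) \<Rightarrow> bool" where
  "abs_continuous_on c d f \<longleftrightarrow>
     (\<forall>e>0. \<exists>\<delta>>0. \<forall>(n::nat) (a::nat \<Rightarrow> real) b.
        (\<forall>i<n. c \<le> a i \<and> a i \<le> b i \<and> b i \<le> d) \<and>
        (\<forall>i<n. \<forall>j<n. i \<noteq> j \<longrightarrow> b i \<le> a j \<or> b j \<le> a i) \<and>
        (\<Sum>i<n. b i - a i) < \<delta>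
        \<longrightarrow> (\<Sum>i<n. \<bar>f (b i) - f (a i)\<bar>) < e)"

text \<open>v (time, space) belongs to L^1([0,1], C([0,1])): each v t is continuous on [0,1],
  v is jointly measurable on [0,1]^2 (so t \<mapsto> v t is strongly measurable into the
  separable space C([0,1])), and t \<mapsto> sup norm of v t is integrable on [0,1].\<close>
definition L1_C :: "(real \<Rightarrow> real \<Rightarrow> real) \<Rightarrow> bool" where
  "L1_C v \<longleftrightarrow>
     (\<forall>t\<in>{0..1}. continuous_on {0..1} (v t)) \<and>
     (\<lambda>(t, x). v t x) \<in> borel_measurable (restrict_space (lborel \<Otimes>\<^sub>M lborel) ({0..1} \<times> {0..1})) \<and>
     set_integrable lborel {0..1} (\<lambda>t. Sup ((\<lambda>x. \<bar>v t x\<bar>) ` {0..1}))"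

text \<open>v belongs to L^2([0,1], H^1_0([0,1])): there is g in L^2([0,1]^2) (the spatial
  derivative) such that for every t, g t is integrable on [0,1], v t x = integral of g t
  from 0 to x on [0,1] (so v t 0 = 0, v t is the continuous representative of an H^1
  function) and v t 1 = 0.  Since H^1_0([0,1]) is a separable Hilbert space with norm
  equivalent to the L^2 norm of the derivative, this is L^2(0,1; H^1_0(0,1)).\<close>
definition L2_H10 :: "(real \<Rightarrow> real \<Rightarrow> real) \<Rightarrow> bool" where
  "L2_H10 v \<longleftrightarrow>
     (\<exists>g :: real \<Rightarrow> real \<Rightarrow> real.
        (\<lambda>(t, y). g t y) \<in> borel_measurable (restrict_space (lborel \<Otimes>\<^sub>M lborel) ({0..1} \<times> {0..1})) \<and>
        integrable (restrict_space (lborel \<Otimes>\<^sub>M lborel) ({0..1} \<times> {0..1})) (\<lambda>(t, y). (g t y)\<^sup>2) \<and>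
        (\<forall>t\<in>{0..1}. set_integrable lborel {0..1} (g t)) \<and>
        (\<forall>t\<in>{0..1}. \<forall>x\<in>{0..1}. v t x = (LBINT y=0..x. g t y)) \<and>
        (\<forall>t\<in>{0..1}. v t 1 = 0))"

definition lagrangian_flow :: "(real \<Rightarrow> real \<Rightarrow> real) \<Rightarrow> (real \<Rightarrow> real \<Rightarrow> real) \<Rightarrow> bool" where
  "lagrangian_flow v \<phi> \<longleftrightarrow>
     L1_C v \<and>
     (\<forall>t\<in>{0..1}. \<forall>x\<in>{0..1}. \<phi> t x \<in> {0..1}) \<and>
     (\<forall>t\<in>{0..1}. mono_on {0..1} (\<phi> t)) \<and>
     (\<forall>x\<in>{0..1}. abs_continuous_on 0 1 (\<lambda>t. \<phi> t x) \<and>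
        set_integrable lborel {0..1} (\<lambda>r. v r (\<phi> r x)) \<and>
        (\<forall>s t. 0 \<le> s \<and> s < t \<and> t \<le> 1 \<longrightarrow>
           \<phi> t x - \<phi> s x = (LBINT r=s..t. v r (\<phi> r x))))"

end

theory Submission
  imports Defs
begin


definition hh :: "real \<Rightarrow> real" where "hh u = 6 * (root 3 (u/2))^2"
definition hdr :: "real \<Rightarrow> real" where "hdr u = 2 / root 3 (u/2)"

lemma hh_cont: "continuous_on UNIV hh"
  unfolding hh_def by (intro continuous_intros) auto

lemma hh_deriv: "0 < u \<Longrightarrow> (hh has_real_derivative hdr u) (at u)"
proof -
  assume u: "0 < u"
  have r: "root 3 (u/2) > 0" using u by simp
  have "((\<lambda>u. u/2) has_real_derivative 1/2) (at u)" by (auto intro!: derivative_eq_intros)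
  from DERIV_chain2[OF DERIV_real_root[of 3 "u/2"] this]
  have "((\<lambda>u. root 3 (u/2)) has_real_derivative inverse (real 3 * root 3 (u/2) ^ (3 - Suc 0)) * (1/2)) (at u)"
    using u by simp
  then have "((\<lambda>u. 6 * (root 3 (u/2))^2) has_real_derivative 6 * (of_nat 2 * ((inverse (real 3 * root 3 (u/2) ^ (3 - Suc 0)) * (1/2)) * root 3 (u/2) ^ (2 - Suc 0)))) (at u)"
    by (intro DERIV_cmult DERIV_power)
  moreover have "6 * (of_nat 2 * ((inverse (real 3 * root 3 (u/2) ^ (3 - Suc 0)) * (1/2)) * root 3 (u/2) ^ (2 - Suc 0))) = hdr u"
    using r by (simp add: hdr_def field_simps power2_eq_square)
  ultimately show ?thesis unfolding hh_def by simp
qed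

lemma hh0[simp]: "hh 0 = 0" by (simp add: hh_def)

lemma cont_cases_at:
  fixes f g :: "real \<Rightarrow> real"
  assumes "continuous_on UNIV f" "continuous_on UNIV g" "f a = g a"
  shows "continuous_on UNIV (\<lambda>y. if y \<le> a then f y else g y)"
proof -
  have "continuous_on ({..a} \<union> {a..}) (\<lambda>y. if y \<le> a then f y else g y)"
    by (rule continuous_on_cases) (use assms in \<open>auto intro: continuous_on_subset\<close>)
  moreover have "{..a} \<union> {a..} = (UNIV::real set)" by auto
  ultimately show ?thesis by simp
qed

definition four :: "(real \<Rightarrow> real) \<Rightarrow> (real \<Rightarrow> real) \<Rightarrow> (real \<Rightarrow> real) \<Rightarrow> (real \<Rightarrow> real) \<Rightarrow> real \<Rightarrow> real" where
  "four A B C D y = (if y \<le> 1/4 then A y else if y \<le> 1/2 then B y else if y \<le> 3/4 then C y else D y)"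

definition fourl :: "(real \<Rightarrow> real) \<Rightarrow> (real \<Rightarrow> real) \<Rightarrow> (real \<Rightarrow> real) \<Rightarrow> (real \<Rightarrow> real) \<Rightarrow> real \<Rightarrow> real" where
  "fourl A B C D y = (if y < 1/4 then A y else if y < 1/2 then B y else if y < 3/4 then C y else D y)"

lemma four_cont:
  assumes "continuous_on UNIV A" "continuous_on UNIV B" "continuous_on UNIV C" "continuous_on UNIV D"
    "A (1/4) = B (1/4)" "B (1/2) = C (1/2)" "C (3/4) = D (3/4)"
  shows "continuous_on UNIV (four A B C D)"
proof -
  have 1: "continuous_on UNIV (\<lambda>y. if y \<le> 3/4 then C y else D y)"
    by (rule cont_cases_at) (use assms in auto)
  have 2: "continuous_on UNIV (\<lambda>y. if y \<le> 1/2 then B y else (if y \<le> 3/4 then C y else D y))"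
    by (rule cont_cases_at[OF _ 1]) (use assms in auto)
  have 3: "continuous_on UNIV (\<lambda>y. if y \<le> 1/4 then A y else (if y \<le> 1/2 then B y else (if y \<le> 3/4 then C y else D y)))"
    by (rule cont_cases_at[OF _ 2]) (use assms in auto)
  show ?thesis using 3 unfolding four_def[abs_def] .
qed

lemma four_deriv:
  assumes "y \<notin> {1/4, 1/2, 3/4}"
    and "0 < y \<Longrightarrow> y < 1/4 \<Longrightarrow> (A has_real_derivative a y) (at y)"
    and "1/4 < y \<Longrightarrow> y < 1/2 \<Longrightarrow> (B has_real_derivative b y) (at y)"
    and "1/2 < y \<Longrightarrow> y < 3/4 \<Longrightarrow> (C has_real_derivative c y) (at y)"
    and "3/4 < y \<Longrightarrow> y < 1 \<Longrightarrow> (D has_real_derivative d y) (at y)"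
    and y01: "0 < y" "y < 1"
  shows "(four A B C D has_real_derivative fourl a b c d y) (at y)"
proof -
  consider "y < 1/4" | "1/4 < y \<and> y < 1/2" | "1/2 < y \<and> y < 3/4" | "3/4 < y" using assms(1) by force
  then show ?thesis
  proof cases
    case 1
    have "(four A B C D has_real_derivative a y) (at y)"
      by (rule has_field_derivative_transform_within_open[OF assms(2)[OF y01(1) 1], of "{..<1/4}"])
         (use 1 in \<open>auto simp: four_def fourl_def\<close>)
    then show ?thesis using 1 by (auto simp: fourl_def)
  next
    case 2
    have "(four A B C D has_real_derivative b y) (at y)"
      by (rule has_field_derivative_transform_within_open[OF assms(3), of "{1/4<..<1/2}"])
         (use 2 in \<open>auto simp: four_def fourl_def\<close>)
    then show ?thesis using 2 by (auto simp: fourl_def)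
  next
    case 3
    have "(four A B C D has_real_derivative c y) (at y)"
      by (rule has_field_derivative_transform_within_open[OF assms(4), of "{1/2<..<3/4}"])
         (use 3 in \<open>auto simp: four_def fourl_def\<close>)
    then show ?thesis using 3 by (auto simp: fourl_def)
  next
    case 4
    have "(four A B C D has_real_derivative d y) (at y)"
      by (rule has_field_derivative_transform_within_open[OF assms(5)[OF _ y01(2)], of "{3/4<..}"])
         (use 4 in \<open>auto simp: four_def fourl_def\<close>)
    then show ?thesis using 4 by (auto simp: fourl_def)
  qed
qed

lemma four_ftc:
  assumes cont: "continuous_on UNIV (four A B C D)"
    and dA: "\<And>y. 0 < y \<Longrightarrow> y < 1/4 \<Longrightarrow> (A has_real_derivative a y) (at y)"
    and dB: "\<And>y. 1/4 < y \<Longrightarrow> y < 1/2 \<Longrightarrow> (B has_real_derivative b y) (at y)"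
    and dC: "\<And>y. 1/2 < y \<Longrightarrow> y < 3/4 \<Longrightarrow> (C has_real_derivative c y) (at y)"
    and dD: "\<And>y. 3/4 < y \<Longrightarrow> y < 1 \<Longrightarrow> (D has_real_derivative d y) (at y)"
    and x: "0 \<le> x" "x \<le> 1"
  shows "(fourl a b c d has_integral (four A B C D x - four A B C D 0)) {0..x}"
proof (rule fundamental_theorem_of_calculus_interior_strong[of "{1/4,1/2,3/4}"])
  show "continuous_on {0..x} (four A B C D)" using cont by (rule continuous_on_subset) auto
  fix y assume y: "y \<in> {0<..<x} - {1/4, 1/2, 3/4}"
  have "(four A B C D has_real_derivative fourl a b c d y) (at y)"
    by (rule four_deriv) (use y x dA dB dC dD in auto)
  then show "(four A B C D has_vector_derivative fourl a b c d y) (at y)"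
    by (simp add: has_real_derivative_iff_has_vector_derivative)
qed (use x in auto)

definition ww :: "real \<Rightarrow> real" where
  "ww = four hh (\<lambda>y. hh (1/2 - y)) (\<lambda>y. - hh (y - 1/2)) (\<lambda>y. - hh (1 - y))"
definition gg :: "real \<Rightarrow> real" where
  "gg = fourl hdr (\<lambda>y. - hdr (1/2 - y)) (\<lambda>y. - hdr (y - 1/2)) (\<lambda>y. hdr (1 - y))"

lemma ww_cont: "continuous_on UNIV ww"
  unfolding ww_def
  by (rule four_cont) (auto intro!: continuous_on_compose2[OF hh_cont] continuous_intros)

lemma ww0[simp]: "ww 0 = 0" and ww1[simp]: "ww 1 = 0" and ww_half[simp]: "ww (1/2) = 0"
  by (auto simp: ww_def four_def)

lemma hh_chain:
  assumes "0 < f y" "(f has_real_derivative f') (at y)"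
  shows "((\<lambda>y. hh (f y)) has_real_derivative hdr (f y) * f') (at y)"
  using DERIV_chain2[OF hh_deriv[OF assms(1)] assms(2)] .

lemma gg_integral:
  assumes "0 \<le> x" "x \<le> 1"
  shows "(gg has_integral ww x) {0..x}"
proof -
  have "(gg has_integral (ww x - ww 0)) {0..x}"
    unfolding ww_def gg_def
  proof (rule four_ftc)
    show "continuous_on UNIV (four hh (\<lambda>y. hh (1/2 - y)) (\<lambda>y. - hh (y - 1/2)) (\<lambda>y. - hh (1 - y)))"
      using ww_cont unfolding ww_def .
  next
    fix y :: real assume "0 < y" "y < 1/4" then show "(hh has_real_derivative hdr y) (at y)" by (intro hh_deriv)
  next
    fix y :: real assume y: "1/4 < y" "y < 1/2"
    show "((\<lambda>y. hh (1/2 - y)) has_real_derivative - hdr (1/2 - y)) (at y)"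
    proof -
      have d: "((\<lambda>y::real. 1/2 - y) has_real_derivative -1) (at y)" by (auto intro!: derivative_eq_intros)
      have "((\<lambda>y. hh (1/2 - y)) has_real_derivative hdr (1/2 - y) * (-1)) (at y)"
        by (rule hh_chain[of "\<lambda>y. 1/2 - y"]) (use y d in auto)
      then show ?thesis by simp
    qed
  next
    fix y :: real assume y: "1/2 < y" "y < 3/4"
    show "((\<lambda>y. - hh (y - 1/2)) has_real_derivative - hdr (y - 1/2)) (at y)"
    proof -
      have d: "((\<lambda>y::real. y - 1/2) has_real_derivative 1) (at y)" by (auto intro!: derivative_eq_intros)
      have "((\<lambda>y. hh (y - 1/2)) has_real_derivative hdr (y - 1/2) * (1)) (at y)"
        by (rule hh_chain[of "\<lambda>y. y - 1/2"]) (use y d in auto)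
      then show ?thesis using DERIV_minus by fastforce
    qed
  next
    fix y :: real assume y: "3/4 < y" "y < 1"
    show "((\<lambda>y. - hh (1 - y)) has_real_derivative hdr (1 - y)) (at y)"
    proof -
      have d: "((\<lambda>y::real. 1 - y) has_real_derivative -1) (at y)" by (auto intro!: derivative_eq_intros)
      have "((\<lambda>y. hh (1 - y)) has_real_derivative hdr (1 - y) * (-1)) (at y)"
        by (rule hh_chain[of "\<lambda>y. 1 - y"]) (use y d in auto)
      then show ?thesis using DERIV_minus by fastforce
    qed
  qed (use assms in auto)
  then show ?thesis by simp
qed

lemma k_chain:
  assumes kd: "\<And>u. 0 < u \<Longrightarrow> u < 1/4 \<Longrightarrow> (k has_real_derivative k' u) (at u)"
    and "0 < f y" "f y < 1/4" "(f has_real_derivative f') (at y)"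
  shows "((\<lambda>y. k (f y)) has_real_derivative k' (f y) * f') (at y)"
  using DERIV_chain2[OF kd[OF assms(2,3)] assms(4)] .

lemma var_integrable:
  assumes kc: "continuous_on UNIV k" and k0: "k 0 = 0"
    and kd: "\<And>u. 0 < u \<Longrightarrow> u < 1/4 \<Longrightarrow> (k has_real_derivative k' u) (at u)"
  shows "fourl k' (\<lambda>y. k' (1/2 - y)) (\<lambda>y. k' (y - 1/2)) (\<lambda>y. k' (1 - y)) integrable_on {0..1}"
proof -
  have "(fourl k' (\<lambda>y. k' (1/2 - y)) (\<lambda>y. k' (y - 1/2)) (\<lambda>y. k' (1 - y)) has_integral
     (four k (\<lambda>y. 2*k(1/4) - k (1/2 - y)) (\<lambda>y. 2*k(1/4) + k (y - 1/2)) (\<lambda>y. 4*k(1/4) - k (1 - y)) 1 -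
      four k (\<lambda>y. 2*k(1/4) - k (1/2 - y)) (\<lambda>y. 2*k(1/4) + k (y - 1/2)) (\<lambda>y. 4*k(1/4) - k (1 - y)) 0)) {0..1}"
  proof (rule four_ftc)
    show "continuous_on UNIV (four k (\<lambda>y. 2*k(1/4) - k (1/2 - y)) (\<lambda>y. 2*k(1/4) + k (y - 1/2)) (\<lambda>y. 4*k(1/4) - k (1 - y)))"
      by (rule four_cont) (auto simp: k0 intro!: continuous_on_compose2[OF kc] continuous_intros)
  next
    fix y :: real assume "0 < y" "y < 1/4" then show "(k has_real_derivative k' y) (at y)" by (intro kd)
  next
    fix y :: real assume y: "1/4 < y" "y < 1/2"
    have d: "((\<lambda>y::real. 1/2 - y) has_real_derivative -1) (at y)" by (auto intro!: derivative_eq_intros)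
    have "((\<lambda>y. k (1/2 - y)) has_real_derivative k' (1/2 - y) * (-1)) (at y)"
      by (rule k_chain[of k k' "\<lambda>y. 1/2 - y"]) (use y d kd in auto)
    then show "((\<lambda>y. 2*k(1/4) - k (1/2 - y)) has_real_derivative k' (1/2 - y)) (at y)"
      using DERIV_diff[OF DERIV_const] by fastforce
  next
    fix y :: real assume y: "1/2 < y" "y < 3/4"
    have d: "((\<lambda>y::real. y - 1/2) has_real_derivative 1) (at y)" by (auto intro!: derivative_eq_intros)
    have "((\<lambda>y. k (y - 1/2)) has_real_derivative k' (y - 1/2) * 1) (at y)"
      by (rule k_chain[of k k' "\<lambda>y. y - 1/2"]) (use y d kd in auto)
    then show "((\<lambda>y. 2*k(1/4) + k (y - 1/2)) has_real_derivative k' (y - 1/2)) (at y)"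
      using DERIV_add[OF DERIV_const] by fastforce
  next
    fix y :: real assume y: "3/4 < y" "y < 1"
    have d: "((\<lambda>y::real. 1 - y) has_real_derivative -1) (at y)" by (auto intro!: derivative_eq_intros)
    have "((\<lambda>y. k (1 - y)) has_real_derivative k' (1 - y) * (-1)) (at y)"
      by (rule k_chain[of k k' "\<lambda>y. 1 - y"]) (use y d kd in auto)
    then show "((\<lambda>y. 4*k(1/4) - k (1 - y)) has_real_derivative k' (1 - y)) (at y)"
      using DERIV_diff[OF DERIV_const] by fastforce
  qed auto
  then show ?thesis by blast
qed

lemma hdr_nonneg: "0 \<le> u \<Longrightarrow> 0 \<le> hdr u"
  by (simp add: hdr_def)

lemma gg_abs_integrable: "gg absolutely_integrable_on {0..1}"
proof (rule absolutely_integrable_onI)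
  show "gg integrable_on {0..1}" using gg_integral[of 1] by auto
  have "fourl hdr (\<lambda>y. hdr (1/2 - y)) (\<lambda>y. hdr (y - 1/2)) (\<lambda>y. hdr (1 - y)) integrable_on {0..1}"
    by (rule var_integrable[OF hh_cont hh0 hh_deriv]) simp
  then show "(\<lambda>x. norm (gg x)) integrable_on {0..1}"
    by (rule integrable_eq) (auto simp: gg_def fourl_def hdr_nonneg)
qed

definition KK :: "real \<Rightarrow> real" where "KK u = 24 * root 3 (u/2)"

lemma KK_deriv: "0 < u \<Longrightarrow> (KK has_real_derivative (hdr u)^2) (at u)"
proof -
  assume u: "0 < u"
  have r: "root 3 (u/2) > 0" using u by simp
  have "((\<lambda>u. u/2) has_real_derivative 1/2) (at u)" by (auto intro!: derivative_eq_intros)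
  from DERIV_chain2[OF DERIV_real_root[of 3 "u/2"] this]
  have "((\<lambda>u. root 3 (u/2)) has_real_derivative inverse (real 3 * root 3 (u/2) ^ (3 - Suc 0)) * (1/2)) (at u)"
    using u by simp
  then have "((\<lambda>u. 24 * root 3 (u/2)) has_real_derivative 24 * (inverse (real 3 * root 3 (u/2) ^ (3 - Suc 0)) * (1/2))) (at u)"
    by (intro DERIV_cmult)
  moreover have "24 * (inverse (real 3 * root 3 (u/2) ^ (3 - Suc 0)) * (1/2)) = (hdr u)^2"
    using r by (simp add: hdr_def field_simps power2_eq_square)
  ultimately show ?thesis unfolding KK_def by simp
qed

lemma gg_sq_abs_integrable: "(\<lambda>y. (gg y)^2) absolutely_integrable_on {0..1}"
proof (rule nonnegative_absolutely_integrable_1)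
  have "fourl (\<lambda>u. (hdr u)^2) (\<lambda>y. (hdr (1/2 - y))^2) (\<lambda>y. (hdr (y - 1/2))^2) (\<lambda>y. (hdr (1 - y))^2) integrable_on {0..1}"
    by (rule var_integrable[of KK]) (auto simp: KK_def intro!: KK_deriv continuous_intros)
  then show "(\<lambda>y. (gg y)^2) integrable_on {0..1}"
    by (rule integrable_eq) (auto simp: gg_def fourl_def)
qed auto

lemma gg_meas: "gg \<in> borel_measurable borel"
  unfolding gg_def fourl_def[abs_def] hdr_def by measurable

lemma gg_meas_lborel[measurable]: "gg \<in> borel_measurable lborel"
  using gg_meas by simp

lemma gg_set_integrable: "set_integrable lborel {0..1} gg"
proof -
  have "integrable lebesgue (\<lambda>x. indicator {0..1} x *\<^sub>R gg x)"
    using gg_abs_integrable unfolding set_integrable_def .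
  then show ?thesis unfolding set_integrable_def
    by (subst (asm) integrable_completion) auto
qed

lemma gg_sq_set_integrable: "set_integrable lborel {0..1} (\<lambda>y. (gg y)^2)"
proof -
  have "integrable lebesgue (\<lambda>x. indicator {0..1} x *\<^sub>R (gg x)^2)"
    using gg_sq_abs_integrable unfolding set_integrable_def .
  then show ?thesis unfolding set_integrable_def
    by (subst (asm) integrable_completion) auto
qed

lemma ww_LBINT: "0 \<le> x \<Longrightarrow> x \<le> 1 \<Longrightarrow> ww x = (LBINT y=0..x. gg y)"
proof -
  assume x: "0 \<le> x" "x \<le> 1"
  have si: "set_integrable lborel {0..x} gg"
    by (rule set_integrable_subset[OF gg_set_integrable]) (use x in auto)
  have "(LBINT y=0..x. gg y) = (LBINT y:{0..x}. gg y)" using interval_integral_Icc[of 0 x gg] x by (simp add: zero_ereal_def)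
  also have "\<dots> = integral {0..x} gg" by (rule set_borel_integral_eq_integral(2)[OF si])
  also have "\<dots> = ww x" using gg_integral[OF x] by (rule integral_unique)
  finally show ?thesis by simp
qed

lemma sq_product_integrable:
  "integrable (restrict_space (lborel \<Otimes>\<^sub>M lborel) ({0..1} \<times> {0..1})) (\<lambda>(t::real, y). (gg y)\<^sup>2)"
proof -
  have sets: "({0..1::real} \<times> {0..1::real}) \<inter> space (lborel \<Otimes>\<^sub>M lborel) \<in> sets (lborel \<Otimes>\<^sub>M lborel)"
    by simp
  define F where "F = (\<lambda>p::real\<times>real. indicator ({0..1} \<times> {0..1}) p *\<^sub>R (case p of (t, y) \<Rightarrow> (gg y)\<^sup>2))"
  have Fm[measurable]: "F \<in> borel_measurable (lborel \<Otimes>\<^sub>M lborel)"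
    unfolding F_def by measurable
  define C where "C = (\<integral>\<^sup>+ y. ennreal (indicator {0..1} y * (gg y)^2) \<partial>lborel)"
  have C: "C < \<infinity>"
    using integrableD(2)[OF gg_sq_set_integrable[unfolded set_integrable_def]]
    by (simp add: C_def top.not_eq_extremum)
  have inner: "(\<integral>\<^sup>+ y. ennreal (F (t, y)) \<partial>lborel) = indicator {0..1} t * C" for t
  proof (cases "t \<in> {0..1}")
    case True
    have "F (t, y) = indicator {0..1} y * (gg y)^2" for y
      using True by (auto simp: F_def indicator_def)
    then show ?thesis using True by (simp add: C_def)
  next
    case False
    have "F (t, y) = 0" for y
      using False by (auto simp: F_def indicator_def)
    then show ?thesis using False by simp
  qed
  have "(\<integral>\<^sup>+ p. ennreal (F p) \<partial>(lborel \<Otimes>\<^sub>M lborel)) = (\<integral>\<^sup>+ t. \<integral>\<^sup>+ y. ennreal (F (t, y)) \<partial>lborel \<partial>lborel)"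
    by (rule lborel.nn_integral_fst[symmetric]) measurable
  also have "\<dots> = (\<integral>\<^sup>+ t. C * indicator {0..1::real} t \<partial>lborel)"
    by (intro nn_integral_cong) (simp add: inner mult.commute)
  also have "\<dots> = C" by (simp add: nn_integral_cmult_indicator)
  finally have "(\<integral>\<^sup>+ p. ennreal (F p) \<partial>(lborel \<Otimes>\<^sub>M lborel)) < \<infinity>" using C by simp
  then have "integrable (lborel \<Otimes>\<^sub>M lborel) F"
    by (intro integrableI_nonneg) (auto simp: F_def)
  then show ?thesis
    by (subst integrable_restrict_space[OF sets]) (simp add: F_def)
qed

lemma L2_ww: "L2_H10 (\<lambda>t. ww)"
  unfolding L2_H10_def
proof (intro exI[of _ "\<lambda>t. gg"] conjI ballI)
  show "(\<lambda>(t::real, y). gg y) \<in> borel_measurable (restrict_space (lborel \<Otimes>\<^sub>M lborel) ({0..1} \<times> {0..1}))"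
    by (rule measurable_restrict_space1) measurable
  show "integrable (restrict_space (lborel \<Otimes>\<^sub>M lborel) ({0..1} \<times> {0..1})) (\<lambda>(t::real, y). (gg y)\<^sup>2)"
    by (rule sq_product_integrable)
qed (auto simp: gg_set_integrable ww_LBINT)



definition PP :: "real \<Rightarrow> real" where
  "PP u = (if u \<le> 1/2 then 2*u^3 else if u \<le> 1 then 1/2 - 2*(1-u)^3 else 1/2)"
definition dP :: "real \<Rightarrow> real" where
  "dP u = (if u \<le> 1/2 then 6*u^2 else if u \<le> 1 then 6*(1-u)^2 else 0)"
definition cc :: "real \<Rightarrow> real" where
  "cc y = (if y \<le> 1/4 then root 3 (y/2) else 1 - root 3 ((1/2 - y)/2))"

lemma half_cube[simp]: "(1/2::real)^3 = 1/8" by (simp add: power3_eq_cube)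

lemma root3_8: "root 3 (1/8) = 1/2" by (rule real_root_pos_unique) auto

lemma PP_cont: "continuous_on UNIV PP"
proof -
  have 1: "continuous_on UNIV (\<lambda>u::real. if u \<le> 1 then 1/2 - 2*(1-u)^3 else 1/2)"
    by (rule cont_cases_at) (auto intro!: continuous_intros)
  have "continuous_on UNIV (\<lambda>u::real. if u \<le> 1/2 then 2*u^3 else (if u \<le> 1 then 1/2 - 2*(1-u)^3 else 1/2))"
    by (rule cont_cases_at[OF _ 1]) (auto intro!: continuous_intros)
  then show ?thesis unfolding PP_def[abs_def] .
qed

lemma PP_ge1: "1 \<le> u \<Longrightarrow> PP u = 1/2"
  by (auto simp: PP_def)

lemma PP_range: "0 \<le> u \<Longrightarrow> 0 \<le> PP u \<and> PP u \<le> 1/2"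
proof -
  assume u: "0 \<le> u"
  show ?thesis
  proof (cases "u \<le> 1/2")
    case True
    have "u^3 \<le> (1/2)^3" by (rule power_mono) (use True u in auto)
    then show ?thesis using True u by (auto simp: PP_def)
  next
    case False
    show ?thesis
    proof (cases "u \<le> 1")
      case True
      have "(1-u)^3 \<le> (1/2)^3" by (rule power_mono) (use True False in auto)
      then show ?thesis using True False by (auto simp: PP_def)
    qed (auto simp: PP_def)
  qed
qed

lemma PP_mono: "0 \<le> u \<Longrightarrow> u \<le> v \<Longrightarrow> PP u \<le> PP v"
proof -
  assume u: "0 \<le> u" and uv: "u \<le> v"
  have a: "u^3 \<le> v^3" by (rule power_mono) (use u uv in auto)
  have b: "(1-v)^3 \<le> (1-u)^3" if "v \<le> 1" by (rule power_mono) (use uv that in auto)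
  have c: "u^3 \<le> (1/2)^3" if "u \<le> 1/2" by (rule power_mono) (use u that in auto)
  have d: "(1-v)^3 \<le> (1/2)^3" if "1/2 < v" "v \<le> 1" by (rule power_mono) (use that in auto)
  have e: "0 \<le> (1-v)^3" if "v \<le> 1" using that by simp
  show ?thesis using a b c d e uv by (auto simp: PP_def)
qed

lemma hh_cube: "0 \<le> a \<Longrightarrow> hh (2 * a^3) = 6 * a^2"
  by (simp add: hh_def odd_real_root_power_cancel)

lemma ww_le14: "y \<le> 1/4 \<Longrightarrow> ww y = hh y" by (simp add: ww_def four_def)
lemma ww_12: "1/4 < y \<Longrightarrow> y \<le> 1/2 \<Longrightarrow> ww y = hh (1/2 - y)" by (simp add: ww_def four_def)

lemma ww_PP: "0 \<le> u \<Longrightarrow> ww (PP u) = dP u"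
proof -
  assume u: "0 \<le> u"
  consider "u \<le> 1/2" | "1/2 < u" "u \<le> 1" | "1 < u" by force
  then show ?thesis
  proof cases
    case 1
    have "u^3 \<le> (1/2)^3" by (rule power_mono) (use 1 u in auto)
    then have "PP u \<le> 1/4" using 1 by (simp add: PP_def)
    then show ?thesis using 1 u by (simp add: ww_le14 PP_def dP_def hh_cube)
  next
    case 2
    have "(1-u)^3 < (1/2)^3" by (rule power_strict_mono) (use 2 in auto)
    moreover have "0 \<le> (1-u)^3" using 2 by simp
    ultimately have "1/4 < PP u" "PP u \<le> 1/2" using 2 by (auto simp: PP_def)
    then have "ww (PP u) = hh (2 * (1-u)^3)" using 2 by (simp add: ww_12 PP_def)
    then show ?thesis using 2 by (simp add: hh_cube dP_def)
  next
    case 3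
    then show ?thesis by (simp add: PP_def dP_def)
  qed
qed

lemma ww_refl: "0 \<le> y \<Longrightarrow> y \<le> 1/2 \<Longrightarrow> ww (1 - y) = - ww y"
proof -
  assume y: "0 \<le> y" "y \<le> 1/2"
  consider "y < 1/4" | "y = 1/4" | "1/4 < y" "y < 1/2" | "y = 1/2" using y by force
  then show ?thesis
  proof cases
    case 2
    show ?thesis unfolding 2 by (simp add: ww_def four_def)
  next
    case 4 show ?thesis unfolding 4 by (simp add: ww_def four_def)
  next
    case 1
    then have "\<not> 1 - y \<le> 3/4" "y \<le> 1/4" by auto
    then show ?thesis by (simp add: ww_def four_def)
  next
    case 3
    then have "\<not> 1 - y \<le> 1/2" "1 - y \<le> 3/4" "\<not> y \<le> 1/4" "y \<le> 1/2" by auto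
    then show ?thesis by (simp add: ww_def four_def)
  qed
qed

lemma ww_1PP: "0 \<le> u \<Longrightarrow> ww (1 - PP u) = - dP u"
  using ww_refl[of "PP u"] PP_range[of u] ww_PP[of u] by simp

lemma PP_deriv: "u \<notin> {1/2, 1} \<Longrightarrow> (PP has_real_derivative dP u) (at u)"
proof -
  assume u: "u \<notin> {1/2, 1}"
  consider "u < 1/2" | "1/2 < u" "u < 1" | "1 < u" using u by force
  then show ?thesis
  proof cases
    case 1
    have "((\<lambda>u. 2*u^3) has_real_derivative 6*u^2) (at u)"
      by (auto intro!: derivative_eq_intros)
    then have "(PP has_real_derivative 6*u^2) (at u)"
      by (rule has_field_derivative_transform_within_open[of _ _ _ "{..<1/2}"]) (use 1 in \<open>auto simp: PP_def\<close>)
    then show ?thesis using 1 by (simp add: dP_def)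
  next
    case 2
    have "((\<lambda>u. 1/2 - 2*(1-u)^3) has_real_derivative 6*(1-u)^2) (at u)"
      by (auto intro!: derivative_eq_intros)
    then have "(PP has_real_derivative 6*(1-u)^2) (at u)"
      by (rule has_field_derivative_transform_within_open[of _ _ _ "{1/2<..<1}"]) (use 2 in \<open>auto simp: PP_def\<close>)
    then show ?thesis using 2 by (simp add: dP_def)
  next
    case 3
    have "((\<lambda>u. 1/2) has_real_derivative 0) (at u)"
      by (auto intro!: derivative_eq_intros)
    then have "(PP has_real_derivative 0) (at u)"
      by (rule has_field_derivative_transform_within_open[of _ _ _ "{1<..}"]) (use 3 in \<open>auto simp: PP_def\<close>)
    then show ?thesis using 3 by (simp add: dP_def)
  qed
qed

lemma cc_props: "0 \<le> y \<Longrightarrow> y \<le> 1/2 \<Longrightarrow> 0 \<le> cc y \<and> cc y \<le> 1 \<and> PP (cc y) = y"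
proof -
  assume y: "0 \<le> y" "y \<le> 1/2"
  show ?thesis
  proof (cases "y \<le> 1/4")
    case True
    have r0: "0 \<le> root 3 (y/2)" using y by simp
    have "root 3 (y/2) \<le> root 3 (1/8)" using True by (subst real_root_le_iff) auto
    then have r1: "root 3 (y/2) \<le> 1/2" by (simp add: root3_8)
    have "(root 3 (y/2))^3 = y/2" using y by simp
    then show ?thesis using True r0 r1 by (simp add: cc_def PP_def)
  next
    case False
    let ?q = "root 3 ((1/2 - y)/2)"
    have r0: "0 \<le> ?q" using y by simp
    have "?q < root 3 (1/8)" using False by (subst real_root_less_iff) auto
    then have r1: "?q < 1/2" by (simp add: root3_8)
    have "?q^3 = (1/2 - y)/2" using y by simp
    then show ?thesis using False r0 r1 by (simp add: cc_def PP_def) (simp add: field_simps)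
  qed
qed

lemma cc_mono: "0 \<le> y1 \<Longrightarrow> y1 \<le> y2 \<Longrightarrow> y2 \<le> 1/2 \<Longrightarrow> cc y1 \<le> cc y2"
proof -
  assume y: "0 \<le> y1" "y1 \<le> y2" "y2 \<le> 1/2"
  have A: "root 3 (y/2) \<le> 1/2" if "y \<le> 1/4" for y
  proof -
    have "root 3 (y/2) \<le> root 3 (1/8)" using that by (subst real_root_le_iff) auto
    then show ?thesis by (simp add: root3_8)
  qed
  have B: "root 3 ((1/2 - y)/2) \<le> 1/2" if "1/4 \<le> y" for y
  proof -
    have "root 3 ((1/2 - y)/2) \<le> root 3 (1/8)" using that by (subst real_root_le_iff) auto
    then show ?thesis by (simp add: root3_8)
  qed
  show ?thesis using y A[of y1] B[of y2] by (auto simp: cc_def)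
qed



lemma traj_lower:
  assumes c: "0 \<le> c" and st: "0 \<le> s" "s \<le> t"
  shows "((\<lambda>r. ww (PP (r + c))) has_integral (PP (t + c) - PP (s + c))) {s..t}"
proof (rule fundamental_theorem_of_calculus_interior_strong[of "{1/2 - c, 1 - c}"])
  show "continuous_on {s..t} (\<lambda>r. PP (r + c))"
    by (intro continuous_on_compose2[OF PP_cont] continuous_intros) auto
  fix r assume r: "r \<in> {s<..<t} - {1/2 - c, 1 - c}"
  have d: "((\<lambda>r. r + c) has_real_derivative 1) (at r)" by (auto intro!: derivative_eq_intros)
  have "r + c \<notin> {1/2, 1}" using r by auto
  from DERIV_chain2[OF PP_deriv[OF this] d]
  have "((\<lambda>r. PP (r + c)) has_real_derivative dP (r + c)) (at r)" by simp
  moreover have "dP (r + c) = ww (PP (r + c))" using r st c by (simp add: ww_PP)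
  ultimately show "((\<lambda>r. PP (r + c)) has_vector_derivative ww (PP (r + c))) (at r)"
    by (simp add: has_real_derivative_iff_has_vector_derivative)
qed (use st in auto)

lemma traj_upper:
  assumes c: "0 \<le> c" and st: "0 \<le> s" "s \<le> t"
  shows "((\<lambda>r. ww (1 - PP (r + c))) has_integral ((1 - PP (t + c)) - (1 - PP (s + c)))) {s..t}"
proof (rule fundamental_theorem_of_calculus_interior_strong[of "{1/2 - c, 1 - c}"])
  show "continuous_on {s..t} (\<lambda>r. 1 - PP (r + c))"
    by (intro continuous_intros continuous_on_compose2[OF PP_cont]) auto
  fix r assume r: "r \<in> {s<..<t} - {1/2 - c, 1 - c}"
  have d: "((\<lambda>r. r + c) has_real_derivative 1) (at r)" by (auto intro!: derivative_eq_intros)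
  have "r + c \<notin> {1/2, 1}" using r by auto
  from DERIV_chain2[OF PP_deriv[OF this] d]
  have "((\<lambda>r. PP (r + c)) has_real_derivative dP (r + c)) (at r)" by simp
  then have "((\<lambda>r. 1 - PP (r + c)) has_real_derivative - dP (r + c)) (at r)"
    using DERIV_diff[OF DERIV_const] by fastforce
  moreover have "- dP (r + c) = ww (1 - PP (r + c))" using r st c by (simp add: ww_1PP)
  ultimately show "((\<lambda>r. 1 - PP (r + c)) has_vector_derivative ww (1 - PP (r + c))) (at r)"
    by (simp add: has_real_derivative_iff_has_vector_derivative)
qed (use st in auto)

lemma lip_ac:
  assumes L: "0 \<le> L" and lip: "\<And>s t. 0 \<le> s \<Longrightarrow> s \<le> t \<Longrightarrow> t \<le> 1 \<Longrightarrow> \<bar>f t - f s\<bar> \<le> L * (t - s)"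
  shows "abs_continuous_on 0 1 f"
  unfolding abs_continuous_on_def
proof (intro allI impI)
  fix e :: real assume e: "0 < e"
  show "\<exists>\<delta>>0. \<forall>(n::nat) (a::nat \<Rightarrow> real) b.
        (\<forall>i<n. 0 \<le> a i \<and> a i \<le> b i \<and> b i \<le> 1) \<and>
        (\<forall>i<n. \<forall>j<n. i \<noteq> j \<longrightarrow> b i \<le> a j \<or> b j \<le> a i) \<and>
        (\<Sum>i<n. b i - a i) < \<delta>
        \<longrightarrow> (\<Sum>i<n. \<bar>f (b i) - f (a i)\<bar>) < e"
  proof (intro exI[of _ "e / (L + 1)"] conjI allI impI)
    show "0 < e / (L + 1)" using e L by simp
    fix n :: nat and a b :: "nat \<Rightarrow> real"
    assume H: "(\<forall>i<n. 0 \<le> a i \<and> a i \<le> b i \<and> b i \<le> 1) \<and>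
        (\<forall>i<n. \<forall>j<n. i \<noteq> j \<longrightarrow> b i \<le> a j \<or> b j \<le> a i) \<and>
        (\<Sum>i<n. b i - a i) < e / (L + 1)"
    have "(\<Sum>i<n. \<bar>f (b i) - f (a i)\<bar>) \<le> (\<Sum>i<n. L * (b i - a i))"
      by (rule sum_mono) (use H lip in auto)
    also have "\<dots> = L * (\<Sum>i<n. b i - a i)" by (simp add: sum_distrib_left)
    also have "\<dots> \<le> (L + 1) * (\<Sum>i<n. b i - a i)"
      by (rule mult_right_mono) (use H in \<open>auto intro!: sum_nonneg\<close>)
    also have "\<dots> < (L + 1) * (e / (L + 1))"
      by (rule mult_strict_left_mono) (use H L in auto)
    also have "\<dots> = e" using L by simp
    finally show "(\<Sum>i<n. \<bar>f (b i) - f (a i)\<bar>) < e" .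
  qed
qed

lemma ww_bound: obtains B where "0 < B" "\<And>y. y \<in> {0..1} \<Longrightarrow> \<bar>ww y\<bar> \<le> B"
proof -
  have "compact (ww ` {0..1})"
    by (rule compact_continuous_image[OF continuous_on_subset[OF ww_cont]]) auto
  then have "bounded (ww ` {0..1})" by (rule compact_imp_bounded)
  then obtain B where B: "B > 0" "\<forall>x\<in>ww ` {0..1}. norm x \<le> B" by (auto simp: bounded_pos)
  then have "\<forall>y\<in>{0..1}. \<bar>ww y\<bar> \<le> B" by auto
  then show ?thesis using that B(1) by blast
qed

lemma flow_traj:
  assumes Tc: "continuous_on UNIV T" and Tr: "\<And>r. r \<in> {0..1} \<Longrightarrow> T r \<in> {0..1}"
    and HK: "\<And>s t. 0 \<le> s \<Longrightarrow> s \<le> t \<Longrightarrow> t \<le> 1 \<Longrightarrow> ((\<lambda>r. ww (T r)) has_integral (T t - T s)) {s..t}"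
  shows "abs_continuous_on 0 1 T \<and> set_integrable lborel {0..1} (\<lambda>r. ww (T r)) \<and>
     (\<forall>s t. 0 \<le> s \<and> s < t \<and> t \<le> 1 \<longrightarrow> T t - T s = (LBINT r=s..t. ww (T r)))"
proof (intro conjI allI impI)
  have wc: "continuous_on UNIV (\<lambda>r. ww (T r))"
    by (rule continuous_on_compose2[OF ww_cont Tc]) auto
  show si: "set_integrable lborel {0..1} (\<lambda>r. ww (T r))"
    by (rule borel_integrable_atLeastAtMost') (use wc continuous_on_subset in blast)
  obtain B where B: "0 < B" "\<And>y. y \<in> {0..1} \<Longrightarrow> \<bar>ww y\<bar> \<le> B" using ww_bound by blast
  show "abs_continuous_on 0 1 T"
  proof (rule lip_ac[of B])
    fix s t :: real assume st: "0 \<le> s" "s \<le> t" "t \<le> 1"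
    have I: "((\<lambda>r. ww (T r)) has_integral (T t - T s)) (cbox s t)" using HK[OF st] by simp
    have "norm (T t - T s) \<le> B * measure lborel (cbox s t)"
      by (rule has_integral_bound[OF _ I]) (use B Tr st in auto)
    then show "\<bar>T t - T s\<bar> \<le> B * (t - s)" using st by simp
  qed (use B in auto)
  fix s t :: real assume st: "0 \<le> s \<and> s < t \<and> t \<le> 1"
  have si2: "set_integrable lborel {s..t} (\<lambda>r. ww (T r))"
    by (rule borel_integrable_atLeastAtMost') (use wc continuous_on_subset in blast)
  have "(LBINT r=s..t. ww (T r)) = (LBINT r:{s..t}. ww (T r))" using st by (simp add: interval_integral_Icc)
  also have "\<dots> = integral {s..t} (\<lambda>r. ww (T r))" by (rule set_borel_integral_eq_integral(2)[OF si2])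
  also have "\<dots> = T t - T s" using HK st by (intro integral_unique) auto
  finally show "T t - T s = (LBINT r=s..t. ww (T r))" by simp
qed



lemma L1_ww: "L1_C (\<lambda>t. ww)"
  unfolding L1_C_def
proof (intro conjI ballI)
  show "continuous_on {0..1} ww" for t using ww_cont by (rule continuous_on_subset) auto
  have [measurable]: "ww \<in> borel_measurable lborel"
    using borel_measurable_continuous_onI[OF ww_cont] by simp
  show "(\<lambda>(t::real, x). ww x) \<in> borel_measurable (restrict_space (lborel \<Otimes>\<^sub>M lborel) ({0..1} \<times> {0..1}))"
    by (rule measurable_restrict_space1) measurable
  show "set_integrable lborel {0..1} (\<lambda>t::real. Sup ((\<lambda>x. \<bar>ww x\<bar>) ` {0..1}))"
    by (rule borel_integrable_atLeastAtMost') (rule continuous_on_const)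
qed

definition flow :: "(real \<Rightarrow> real) \<Rightarrow> real \<Rightarrow> real \<Rightarrow> real" where
  "flow f t x = (if x \<le> 0 then 0 else if 1 \<le> x then 1 else
      if f x \<le> 1/2 then PP (t + cc (f x)) else 1 - PP (t + cc (1 - f x)))"

theorem mainTheorem4:
  fixes \<phi>\<^sub>0 :: "real \<Rightarrow> real"
  assumes "\<phi>\<^sub>0 \<in> Mon_plus"
  shows "\<exists>v \<phi>. L2_H10 v \<and> lagrangian_flow v \<phi> \<and>
           (\<forall>x\<in>{0..1}. \<phi> 0 x = \<phi>\<^sub>0 x) \<and>
           (\<forall>x. 0 < x \<and> x < 1 \<longrightarrow> \<phi> 1 x = 1/2) \<and>
           \<phi> 1 0 = 0 \<and> \<phi> 1 1 = 1"
proof -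
  have mono: "mono_on {0..1} \<phi>\<^sub>0" and rng: "\<And>x. x \<in> {0..1} \<Longrightarrow> \<phi>\<^sub>0 x \<in> {0..1}"
    and f0: "\<phi>\<^sub>0 0 = 0" and f1: "\<phi>\<^sub>0 1 = 1"
    using assms by (auto simp: Mon_plus_def image_subset_iff)
  let ?\<phi> = "flow \<phi>\<^sub>0"
  have range: "?\<phi> t x \<in> {0..1}" if t: "0 \<le> t" for t x
  proof -
    have a: "0 \<le> cc (\<phi>\<^sub>0 x) \<and> cc (\<phi>\<^sub>0 x) \<le> 1" if "0 < x" "x < 1" "\<phi>\<^sub>0 x \<le> 1/2"
      using cc_props[of "\<phi>\<^sub>0 x"] rng[of x] that by auto
    have b: "0 \<le> cc (1 - \<phi>\<^sub>0 x) \<and> cc (1 - \<phi>\<^sub>0 x) \<le> 1" if "0 < x" "x < 1" "\<not> \<phi>\<^sub>0 x \<le> 1/2"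
      using cc_props[of "1 - \<phi>\<^sub>0 x"] rng[of x] that by auto
    show ?thesis using a b PP_range[of "t + cc (\<phi>\<^sub>0 x)"] PP_range[of "t + cc (1 - \<phi>\<^sub>0 x)"] t
      by (auto simp: flow_def)
  qed
  have L: "lagrangian_flow (\<lambda>t. ww) ?\<phi>"
    unfolding lagrangian_flow_def
  proof (intro conjI ballI)
    show "L1_C (\<lambda>t. ww)" by (rule L1_ww)
    fix t x :: real assume "t \<in> {0..1}" "x \<in> {0..1}"
    then show "?\<phi> t x \<in> {0..1}" using range by auto
  next
    fix t :: real assume t: "t \<in> {0..1}"
    show "mono_on {0..1} (?\<phi> t)"
    proof (rule mono_onI)
      fix x1 x2 :: real assume x: "x1 \<in> {0..1}" "x2 \<in> {0..1}" "x1 \<le> x2"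
      show "?\<phi> t x1 \<le> ?\<phi> t x2"
      proof (cases "x1 \<le> 0 \<or> 1 \<le> x2")
        case True
        then show ?thesis using range[of t x1] range[of t x2] t x by (auto simp: flow_def)
      next
        case False
        then have xx: "0 < x1" "x2 < 1" by auto
        let ?y1 = "\<phi>\<^sub>0 x1" and ?y2 = "\<phi>\<^sub>0 x2"
        have y: "?y1 \<le> ?y2" using mono x by (auto intro: mono_onD)
        have y1: "0 \<le> ?y1" "?y1 \<le> 1" and y2: "0 \<le> ?y2" "?y2 \<le> 1" using rng x by auto
        consider "?y2 \<le> 1/2" | "?y1 \<le> 1/2" "\<not> ?y2 \<le> 1/2" | "\<not> ?y1 \<le> 1/2" using y by linarith
        then show ?thesis
        proof cases
          case 1
          have "cc ?y1 \<le> cc ?y2" by (rule cc_mono) (use y y1 1 in auto)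
          moreover have "0 \<le> cc ?y1" using cc_props[of ?y1] y1 y 1 by auto
          ultimately have "PP (t + cc ?y1) \<le> PP (t + cc ?y2)" using t by (intro PP_mono) auto
          then show ?thesis using xx x 1 y by (auto simp: flow_def)
        next
          case 2
          have "0 \<le> cc ?y1" using cc_props[of ?y1] y1 2 by auto
          moreover have "0 \<le> cc (1 - ?y2)" using cc_props[of "1 - ?y2"] y2 2 by auto
          ultimately show ?thesis using xx x 2 t PP_range[of "t + cc ?y1"] PP_range[of "t + cc (1 - ?y2)"]
            by (auto simp: flow_def)
        next
          case 3
          have "cc (1 - ?y2) \<le> cc (1 - ?y1)" by (rule cc_mono) (use y y2 3 in auto)
          moreover have "0 \<le> cc (1 - ?y2)" using cc_props[of "1 - ?y2"] y2 y 3 by auto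
          ultimately have "PP (t + cc (1 - ?y2)) \<le> PP (t + cc (1 - ?y1))" using t by (intro PP_mono) auto
          then show ?thesis using xx x 3 y by (auto simp: flow_def)
        qed
      qed
    qed
  next
    fix x :: real assume x: "x \<in> {0..1}"
    have "abs_continuous_on 0 1 (\<lambda>t. ?\<phi> t x) \<and> set_integrable lborel {0..1} (\<lambda>r. ww (?\<phi> r x)) \<and>
     (\<forall>s t. 0 \<le> s \<and> s < t \<and> t \<le> 1 \<longrightarrow> ?\<phi> t x - ?\<phi> s x = (LBINT r=s..t. ww (?\<phi> r x)))"
    proof (rule flow_traj)
      show "\<And>r. r \<in> {0..1} \<Longrightarrow> ?\<phi> r x \<in> {0..1}" using range by auto
      consider "x \<le> 0" | "1 \<le> x" | "0 < x" "x < 1" "\<phi>\<^sub>0 x \<le> 1/2" | "0 < x" "x < 1" "\<not> \<phi>\<^sub>0 x \<le> 1/2" by force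
      note cs = this
      show "continuous_on UNIV (\<lambda>t. ?\<phi> t x)"
      proof (cases rule: cs)
        case 3 then show ?thesis
          by (simp add: flow_def) (intro continuous_on_compose2[OF PP_cont] continuous_intros, auto)
      next
        case 4 then show ?thesis
          by (simp add: flow_def) (intro continuous_intros continuous_on_compose2[OF PP_cont], auto)
      qed (auto simp: flow_def)
      fix s t :: real assume st: "0 \<le> s" "s \<le> t" "t \<le> 1"
      show "((\<lambda>r. ww (?\<phi> r x)) has_integral (?\<phi> t x - ?\<phi> s x)) {s..t}"
      proof (cases rule: cs)
        case 3
        have "0 \<le> cc (\<phi>\<^sub>0 x)" using cc_props[of "\<phi>\<^sub>0 x"] rng[of x] x 3 by auto
        from traj_lower[OF this st(1,2)] show ?thesis using 3 by (simp add: flow_def)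
      next
        case 4
        have "0 \<le> cc (1 - \<phi>\<^sub>0 x)" using cc_props[of "1 - \<phi>\<^sub>0 x"] rng[of x] x 4 by auto
        from traj_upper[OF this st(1,2)] show ?thesis using 4 by (simp add: flow_def)
      qed (auto simp: flow_def)
    qed
    then show "abs_continuous_on 0 1 (\<lambda>t. ?\<phi> t x)" "set_integrable lborel {0..1} (\<lambda>r. ww (?\<phi> r x))"
      "\<forall>s t. 0 \<le> s \<and> s < t \<and> t \<le> 1 \<longrightarrow> ?\<phi> t x - ?\<phi> s x = (LBINT r=s..t. ww (?\<phi> r x))"
      by auto
  qed
  have I: "\<forall>x\<in>{0..1}. ?\<phi> 0 x = \<phi>\<^sub>0 x"
  proof
    fix x :: real assume x: "x \<in> {0..1}"
    consider "x = 0" | "x = 1" | "0 < x" "x < 1" "\<phi>\<^sub>0 x \<le> 1/2" | "0 < x" "x < 1" "\<not> \<phi>\<^sub>0 x \<le> 1/2"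
      using x by force
    then show "?\<phi> 0 x = \<phi>\<^sub>0 x"
    proof cases
      case 3 then show ?thesis using cc_props[of "\<phi>\<^sub>0 x"] rng[of x] by (simp add: flow_def)
    next
      case 4 then show ?thesis using cc_props[of "1 - \<phi>\<^sub>0 x"] rng[of x] by (simp add: flow_def)
    qed (auto simp: flow_def f0 f1)
  qed
  have E: "\<forall>x. 0 < x \<and> x < 1 \<longrightarrow> ?\<phi> 1 x = 1/2"
  proof (intro allI impI)
    fix x :: real assume x: "0 < x \<and> x < 1"
    have "0 \<le> cc (\<phi>\<^sub>0 x)" if "\<phi>\<^sub>0 x \<le> 1/2" using cc_props[of "\<phi>\<^sub>0 x"] rng[of x] x that by auto
    moreover have "0 \<le> cc (1 - \<phi>\<^sub>0 x)" if "\<not> \<phi>\<^sub>0 x \<le> 1/2" using cc_props[of "1 - \<phi>\<^sub>0 x"] rng[of x] x that by auto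
    ultimately show "?\<phi> 1 x = 1/2" using x by (auto simp: flow_def PP_ge1)
  qed
  show ?thesis
    by (rule exI[of _ "\<lambda>t. ww"], rule exI[of _ ?\<phi>]) (use L2_ww L I E in \<open>auto simp: flow_def\<close>)
qed


end
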